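(* There is an absolute constant $c_0 > 0$ such that the following holds. Let $\mathcal{U}$ be a finite set, $\mathbf{a} \in \mathbb{Z}_{\geq 0}^{\mathcal{U}}$ with $F_1 = \sum_{i \in \mathcal{U}} \mathbf{a}_i$, let $k > 0$, $\delta \in (0,1)$, and let $A \subseteq \mathcal{U}$ be such that $\mathbf{a}_i \leq F_1\delta/(2k^2)$ for all $i \in A$. Let $h \geq c_0 k$ be an integer and $f : \mathcal{U} \to [h]$ a pairwise-independent hash function. Then with probability at least $1-\delta$, \[ \forall j \in [h]:\quad \sum_{i \in A \cap f^{-1}(j)} \mathbf{a}_i \leq F_1/k . \]
   Context: $f$ is a pairwise-independent hash function if for each $i$, $f(i)$ is uniformly distributed on $[h] = \{1,\dots,h\}$ and for any distinct $i,i'$ the values $f(i), f(i')$ are independent. *)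

theory Defs
  imports "HOL-Probability.Probability"
begin

definition pairwise_indep_hash :: "('u \<Rightarrow> nat) pmf \<Rightarrow> 'u set \<Rightarrow> nat \<Rightarrow> bool" where
  "pairwise_indep_hash p U h \<longleftrightarrow>
     (\<forall>i\<in>U. map_pmf (\<lambda>f. f i) p = pmf_of_set {1..h}) \<and>
     (\<forall>i\<in>U. \<forall>i'\<in>U. i \<noteq> i' \<longrightarrow>
        map_pmf (\<lambda>f. (f i, f i')) p = pair_pmf (pmf_of_set {1..h}) (pmf_of_set {1..h}))"

end

theory Submission
  imports Defs
begin



lemma phi_sum:
  fixes h j :: nat assumes "j \<in> {1..h}"
  shows "(\<Sum>x\<in>{1..h}. (if x = j then 1 else 0) - 1 / real h) = 0"
proof -
  have "h \<ge> 1" using assms by auto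
  have "(\<Sum>x\<in>{1..h}. (if x = j then 1 else 0) - 1 / real h) =
        (\<Sum>x\<in>{1..h}. (if x = j then 1::real else 0)) - real h * (1 / real h)"
    by (simp add: sum_subtractf)
  also have "\<dots> = 0" using assms \<open>h \<ge> 1\<close> by simp
  finally show ?thesis .
qed

lemma cross_zero:
  assumes ph: "pairwise_indep_hash p U h" and i: "i \<in> U" "i' \<in> U" "i \<noteq> i'" and j: "j \<in> {1..h}"
  shows "measure_pmf.expectation p (\<lambda>f. ((if f i = j then 1 else 0) - 1 / real h) *
           ((if f i' = j then 1 else 0) - 1 / real h)) = 0"
proof -
  define \<phi> where "\<phi> x = (if x = j then 1 else 0) - 1 / real h" for x :: nat
  define P where "P = pmf_of_set {1..h}"
  have h1: "h \<ge> 1" using j by auto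
  have ne: "{1..h} \<noteq> {}" using h1 by auto
  have "measure_pmf.expectation p (\<lambda>f. \<phi> (f i) * \<phi> (f i')) =
        measure_pmf.expectation (map_pmf (\<lambda>f. (f i, f i')) p) (\<lambda>(x,y). \<phi> x * \<phi> y)"
    by simp
  also have "map_pmf (\<lambda>f. (f i, f i')) p = pair_pmf P P"
    using ph i unfolding pairwise_indep_hash_def P_def by auto
  also have "measure_pmf.expectation (pair_pmf P P) (\<lambda>(x,y). \<phi> x * \<phi> y) =
       (\<Sum>a\<in>{1..h}\<times>{1..h}. (case a of (x,y) \<Rightarrow> \<phi> x * \<phi> y) * pmf (pair_pmf P P) a)"
    using set_pmf_of_set[OF ne] by (intro integral_measure_pmf_real) (auto simp: P_def)
  also have "\<dots> = (\<Sum>x\<in>{1..h}. \<Sum>y\<in>{1..h}. \<phi> x * \<phi> y / (real h * real h))"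
    unfolding sum.cartesian_product
    by (intro sum.cong) (auto simp: pmf_pair P_def set_pmf_of_set[OF ne])
  also have "\<dots> = (\<Sum>x\<in>{1..h}. \<phi> x) * (\<Sum>y\<in>{1..h}. \<phi> y) / (real h * real h)"
    by (simp add: sum_product sum_divide_distrib)
  also have "\<dots> = 0" using phi_sum[OF j] by (simp add: \<phi>_def)
  finally show ?thesis by (simp add: \<phi>_def)
qed

lemma diag_bound:
  assumes ph: "pairwise_indep_hash p U h" and i: "i \<in> U" and j: "j \<in> {1..h}"
  shows "measure_pmf.expectation p (\<lambda>f. ((if f i = j then 1 else 0) - 1 / real h) *
           ((if f i = j then 1 else 0) - 1 / real h)) \<le> 1 / real h"
proof -
  define \<phi> where "\<phi> x = (if x = j then 1 else 0) - 1 / real h" for x :: nat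
  have h1: "h \<ge> 1" using j by auto
  have ne: "{1..h} \<noteq> {}" using h1 by auto
  have "measure_pmf.expectation p (\<lambda>f. \<phi> (f i) * \<phi> (f i)) =
        measure_pmf.expectation (map_pmf (\<lambda>f. f i) p) (\<lambda>x. \<phi> x * \<phi> x)"
    by simp
  also have "map_pmf (\<lambda>f. f i) p = pmf_of_set {1..h}"
    using ph i unfolding pairwise_indep_hash_def by auto
  also have "measure_pmf.expectation (pmf_of_set {1..h}) (\<lambda>x. \<phi> x * \<phi> x) =
      (\<Sum>x\<in>{1..h}. \<phi> x * \<phi> x) / real h"
    using h1 by (subst integral_pmf_of_set) (auto simp: ne)
  also have "(\<Sum>x\<in>{1..h}. \<phi> x * \<phi> x) = (\<Sum>x\<in>{1..h}. \<phi> x * (if x = j then 1 else 0)) - (1/real h) * (\<Sum>x\<in>{1..h}. \<phi> x)"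
  proof -
    have "\<And>x. \<phi> x * \<phi> x = \<phi> x * (if x = j then 1 else 0) - (1/real h) * \<phi> x"
      by (simp add: \<phi>_def algebra_simps)
    then show ?thesis by (simp add: sum_subtractf sum_distrib_left)
  qed
  also have "\<dots> = \<phi> j"
  proof -
    have "(\<lambda>x. \<phi> x * (if x = j then 1 else 0)) = (\<lambda>x. if x = j then \<phi> j else 0)" by auto
    moreover have "(\<Sum>x\<in>{1..h}. \<phi> x) = 0" using phi_sum[OF j] by (simp add: \<phi>_def)
    ultimately have "(\<Sum>x\<in>{1..h}. \<phi> x * (if x = j then 1 else 0)) - (1 / real h) * (\<Sum>x\<in>{1..h}. \<phi> x) = (\<Sum>x\<in>{1..h}. if x = j then \<phi> j else 0)"
      by (simp only: mult_zero_right diff_zero)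
    also have "\<dots> = \<phi> j" using j by (simp only: sum.delta finite_atLeastAtMost) simp
    finally show ?thesis .
  qed
  also have "\<phi> j \<le> 1" by (simp add: \<phi>_def)
  finally show ?thesis using h1 by (simp add: \<phi>_def divide_right_mono)
qed

lemma pmf_integrable_bdd:
  fixes g :: "'a \<Rightarrow> real"
  assumes "\<And>x. \<bar>g x\<bar> \<le> B"
  shows "integrable (measure_pmf p) g"
  by (rule measure_pmf.integrable_const_bound[of _ B]) (use assms in auto)

lemma phi_abs: "\<bar>(if x = j then 1 else 0) - 1 / real h\<bar> \<le> (1::real)"
proof (cases "h = 0")
  case False
  then have "1 / real h \<le> 1" "0 \<le> 1 / real h" by auto
  then show ?thesis by auto
qed auto

lemma Y2_bound:
  assumes ph: "pairwise_indep_hash p U h" and A: "A \<subseteq> U" "finite A" and j: "j \<in> {1..h}"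
  shows "measure_pmf.expectation p
     (\<lambda>f. (\<Sum>i\<in>A. real (a i) * ((if f i = j then 1 else 0) - 1 / real h))\<^sup>2)
      \<le> (\<Sum>i\<in>A. (real (a i))\<^sup>2) / real h"
proof -
  define \<phi> where "\<phi> x = (if x = j then 1 else 0) - 1 / real h" for x :: nat
  have pa: "\<bar>\<phi> x\<bar> \<le> 1" for x unfolding \<phi>_def by (rule phi_abs)
  have pp: "\<bar>\<phi> x * \<phi> y\<bar> \<le> 1" for x y
    using mult_mono[OF pa[of x] pa[of y]] by (simp add: abs_mult)
  have int: "integrable (measure_pmf p) (\<lambda>f. real (a i) * real (a i') * (\<phi> (f i) * \<phi> (f i')))" for i i'
    by (rule pmf_integrable_bdd[of _ "real (a i) * real (a i')"])
       (use pp in \<open>auto simp: abs_mult intro: mult_left_le\<close>)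
  have "(\<lambda>f. (\<Sum>i\<in>A. real (a i) * \<phi> (f i))\<^sup>2) =
        (\<lambda>f. \<Sum>i\<in>A. \<Sum>i'\<in>A. real (a i) * real (a i') * (\<phi> (f i) * \<phi> (f i')))"
    by (auto simp: power2_eq_square sum_product intro!: sum.cong)
  then have "measure_pmf.expectation p (\<lambda>f. (\<Sum>i\<in>A. real (a i) * \<phi> (f i))\<^sup>2) =
     (\<Sum>i\<in>A. \<Sum>i'\<in>A. real (a i) * real (a i') *
         measure_pmf.expectation p (\<lambda>f. \<phi> (f i) * \<phi> (f i')))"
    using int by (simp add: Bochner_Integration.integral_sum integrable_sum)
  also have "\<dots> = (\<Sum>i\<in>A. \<Sum>i'\<in>A. if i' = i then real (a i) * real (a i) *
         measure_pmf.expectation p (\<lambda>f. \<phi> (f i) * \<phi> (f i)) else 0)"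
    using cross_zero[OF ph _ _ _ j] A unfolding \<phi>_def
    by (intro sum.cong refl) auto
  also have "\<dots> = (\<Sum>i\<in>A. real (a i) * real (a i) *
         measure_pmf.expectation p (\<lambda>f. \<phi> (f i) * \<phi> (f i)))"
    using A by (simp add: sum.delta)
  also have "\<dots> \<le> (\<Sum>i\<in>A. real (a i) * real (a i) * (1 / real h))"
    using diag_bound[OF ph _ j] A unfolding \<phi>_def
    by (intro sum_mono mult_left_mono) auto
  also have "\<dots> = (\<Sum>i\<in>A. (real (a i))\<^sup>2) / real h"
    by (simp add: power2_eq_square sum_divide_distrib)
  finally show ?thesis unfolding \<phi>_def .
qed


lemma main:
  fixes U :: "nat set" and a :: "nat \<Rightarrow> nat" and k \<delta> :: real and A :: "nat set" and h :: nat
    and p :: "(nat \<Rightarrow> nat) pmf"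
  assumes U: "finite U" and k: "k > 0" and d: "0 < \<delta>" "\<delta> < 1" and AU: "A \<subseteq> U"
    and abd: "\<forall>i\<in>A. real (a i) \<le> real (\<Sum>i'\<in>U. a i') * \<delta> / (2 * k\<^sup>2)"
    and hk: "real h \<ge> 4 * k" and ph: "pairwise_indep_hash p U h"
  shows "measure_pmf.prob p
        {f. \<forall>j\<in>{1..h}. real (\<Sum>i\<in>{i\<in>A. f i = j}. a i) \<le> real (\<Sum>i'\<in>U. a i') / k}
        \<ge> 1 - \<delta>"
proof -
  define F where "F = real (\<Sum>i'\<in>U. a i')"
  define S where "S = {f. \<forall>j\<in>{1..h}. real (\<Sum>i\<in>{i\<in>A. f i = j}. a i) \<le> F / k}"
  have fA: "finite A" using U AU finite_subset by auto
  show ?thesis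
  proof (cases "F = 0")
    case True
    then have "(\<Sum>i'\<in>U. a i') = 0" unfolding F_def by (simp only: of_nat_eq_0_iff)
    then have "\<forall>i\<in>U. a i = 0" using U by simp
    then have "\<forall>i\<in>A. a i = 0" using AU by auto
    then have "S = UNIV" using True unfolding S_def by auto
    then show ?thesis using d unfolding S_def F_def by simp
  next
    case False
    moreover have "F \<ge> 0" unfolding F_def by (rule of_nat_0_le_iff)
    ultimately have Fpos: "F > 0" by linarith
    have h1: "h \<ge> 1" using hk k by (cases h) auto
    have hpos: "real h > 0" using h1 by auto
    define M where "M = F * \<delta> / (2 * k\<^sup>2)"
    define \<phi> where "\<phi> j x = (if x = j then 1 else 0) - 1 / real h" for j x :: nat
    define Y where "Y j f = (\<Sum>i\<in>A. real (a i) * \<phi> j (f i))" for j and f :: "nat \<Rightarrow> nat"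
    define Z where "Z f = (\<Sum>j\<in>{1..h}. (Y j f)\<^sup>2)" for f :: "nat \<Rightarrow> nat"
    define T where "T = 9 * F\<^sup>2 / (16 * k\<^sup>2)"
    have Tpos: "T > 0" using Fpos k by (simp add: T_def)
    have aA: "real (\<Sum>i\<in>A. a i) \<le> F"
      unfolding F_def of_nat_le_iff by (rule sum_mono2[OF U AU]) auto
    have sq: "(\<Sum>i\<in>A. (real (a i))\<^sup>2) \<le> M * F"
    proof -
      have "(\<Sum>i\<in>A. (real (a i))\<^sup>2) \<le> (\<Sum>i\<in>A. real (a i) * M)"
      proof (intro sum_mono)
        fix i assume "i \<in> A"
        then have "real (a i) \<le> M" using abd by (simp add: M_def F_def)
        then show "(real (a i))\<^sup>2 \<le> real (a i) * M"
          unfolding power2_eq_square by (intro mult_left_mono) auto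
      qed
      also have "\<dots> = M * real (\<Sum>i\<in>A. a i)" by (simp add: sum_distrib_left mult.commute)
      also have "\<dots> \<le> M * F" using aA by (intro mult_left_mono) (use Fpos d k in \<open>auto simp: M_def\<close>)
      finally show ?thesis .
    qed
    have EY: "measure_pmf.expectation p (\<lambda>f. (Y j f)\<^sup>2) \<le> M * F / real h" if j: "j \<in> {1..h}" for j
      using Y2_bound[OF ph AU fA j, of a] sq hpos unfolding Y_def \<phi>_def
      by (meson divide_right_mono less_imp_le order_trans)
    have pa: "\<bar>\<phi> j x\<bar> \<le> 1" for j x unfolding \<phi>_def by (rule phi_abs)
    have Ybd: "\<bar>Y j f\<bar> \<le> (\<Sum>i\<in>A. real (a i))" for j f
    proof -
      have "\<bar>Y j f\<bar> \<le> (\<Sum>i\<in>A. \<bar>real (a i) * \<phi> j (f i)\<bar>)" unfolding Y_def by (rule sum_abs)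
      also have "\<dots> \<le> (\<Sum>i\<in>A. real (a i))"
        using pa by (intro sum_mono) (auto simp: abs_mult intro: mult_left_le)
      finally show ?thesis .
    qed
    have intY: "integrable (measure_pmf p) (\<lambda>f. (Y j f)\<^sup>2)" for j
    proof (rule pmf_integrable_bdd[of _ "(\<Sum>i\<in>A. real (a i))\<^sup>2"])
      fix f show "\<bar>(Y j f)\<^sup>2\<bar> \<le> (\<Sum>i\<in>A. real (a i))\<^sup>2"
        using power_mono[OF Ybd[of j f] abs_ge_zero, of 2] by simp
    qed
    have intZ: "integrable (measure_pmf p) Z" unfolding Z_def using intY by auto
    have EZ: "measure_pmf.expectation p Z \<le> M * F"
    proof -
      have "measure_pmf.expectation p Z = (\<Sum>j\<in>{1..h}. measure_pmf.expectation p (\<lambda>f. (Y j f)\<^sup>2))"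
        unfolding Z_def using intY by (simp add: Bochner_Integration.integral_sum)
      also have "\<dots> \<le> (\<Sum>j\<in>{1..h}. M * F / real h)" using EY by (intro sum_mono) auto
      also have "\<dots> = M * F" using hpos by simp
      finally show ?thesis .
    qed
    have sub: "UNIV - S \<subseteq> {f \<in> space (measure_pmf p). Z f \<ge> T}"
    proof
      fix f assume "f \<in> UNIV - S"
      then obtain j where j: "j \<in> {1..h}" and gt: "real (\<Sum>i\<in>{i\<in>A. f i = j}. a i) > F / k"
        unfolding S_def by auto
      have "real (\<Sum>i\<in>{i\<in>A. f i = j}. a i) = (\<Sum>i\<in>A. real (a i) * (if f i = j then 1 else 0))"
        using fA by (simp add: sum.inter_filter[symmetric] of_nat_sum if_distrib cong: if_cong)
      then have XY: "real (\<Sum>i\<in>{i\<in>A. f i = j}. a i) = Y j f + real (\<Sum>i\<in>A. a i) / real h"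
        unfolding Y_def \<phi>_def by (simp add: algebra_simps sum_subtractf sum_distrib_left sum_divide_distrib)
      have "real (\<Sum>i\<in>A. a i) / real h \<le> F / real h" using aA hpos by (simp add: divide_right_mono)
      also have "\<dots> \<le> F / (4 * k)" using hk k Fpos by (intro divide_left_mono) auto
      finally have "Y j f > F / k - F / (4 * k)" using gt XY by linarith
      then have Yg: "Y j f > 3 * F / (4 * k)" using k by (simp add: field_simps)
      have "0 \<le> 3 * F / (4 * k)" using Fpos k by simp
      then have "(3 * F / (4 * k))\<^sup>2 \<le> (Y j f)\<^sup>2" using Yg by (intro power_mono) auto
      then have "T \<le> (Y j f)\<^sup>2" by (simp add: T_def power_divide power_mult_distrib)
      also have "\<dots> \<le> Z f" unfolding Z_def using j by (intro member_le_sum) auto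
      finally show "f \<in> {f \<in> space (measure_pmf p). Z f \<ge> T}" by simp
    qed
    have "measure_pmf.prob p (UNIV - S) \<le> measure_pmf.prob p {f \<in> space (measure_pmf p). Z f \<ge> T}"
      using sub by (intro measure_pmf.finite_measure_mono) auto
    also have "\<dots> \<le> measure_pmf.expectation p Z / T"
      by (rule integral_Markov_inequality_measure[OF intZ, of UNIV]) (auto simp: Z_def Tpos intro!: AE_I2 sum_nonneg)
    also have "\<dots> \<le> M * F / T" using EZ Tpos by (simp add: divide_right_mono)
    also have "M * F / T = 8 * \<delta> / 9"
      using Fpos k by (simp add: M_def T_def field_simps power2_eq_square)
    also have "\<dots> \<le> \<delta>" using d by simp
    finally have "measure_pmf.prob p (UNIV - S) \<le> \<delta>" .
    moreover have "measure_pmf.prob p (UNIV - S) = 1 - measure_pmf.prob p S"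
      using measure_pmf.prob_compl[of S p] by simp
    ultimately show ?thesis unfolding S_def F_def by simp
  qed
qed


theorem lemma7:
  shows "\<exists>c0::real. c0 > 0 \<and>
    (\<forall>(U::nat set) (a::nat \<Rightarrow> nat) (k::real) (\<delta>::real) (A::nat set) (h::nat)
        (p::(nat \<Rightarrow> nat) pmf).
      finite U \<longrightarrow> k > 0 \<longrightarrow> 0 < \<delta> \<longrightarrow> \<delta> < 1 \<longrightarrow> A \<subseteq> U \<longrightarrow>
      (\<forall>i\<in>A. real (a i) \<le> real (\<Sum>i'\<in>U. a i') * \<delta> / (2 * k\<^sup>2)) \<longrightarrow>
      real h \<ge> c0 * k \<longrightarrow>
      pairwise_indep_hash p U h \<longrightarrow>
      measure_pmf.prob p
        {f. \<forall>j\<in>{1..h}. real (\<Sum>i\<in>{i\<in>A. f i = j}. a i) \<le> real (\<Sum>i'\<in>U. a i') / k}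
        \<ge> 1 - \<delta>)"
  proof (intro exI[of _ 4] conjI allI impI)
  fix U :: "nat set" and a :: "nat \<Rightarrow> nat" and k \<delta> :: real and A :: "nat set" and h :: nat
    and p :: "(nat \<Rightarrow> nat) pmf"
  assume "finite U" "k > 0" "0 < \<delta>" "\<delta> < 1" "A \<subseteq> U"
    "\<forall>i\<in>A. real (a i) \<le> real (\<Sum>i'\<in>U. a i') * \<delta> / (2 * k\<^sup>2)"
    "real h \<ge> 4 * k" "pairwise_indep_hash p U h"
  then show "measure_pmf.prob p
        {f. \<forall>j\<in>{1..h}. real (\<Sum>i\<in>{i\<in>A. f i = j}. a i) \<le> real (\<Sum>i'\<in>U. a i') / k}
        \<ge> 1 - \<delta>" by (rule main)
qed simp

end
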